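(* Let $V\subset\mathbb{R}^d$ be a finite antichain and let $g\in S_V$ be a generated point which has two minimal generating sets of different cardinalities. Then there exist three minima $x,u,v\in D_g$ and two coordinates $i\neq j$ such that $u_i<v_i=x_i=g_i$ and $v_j<u_j=x_j=g_j$.
   Context: For $x,y\in\mathbb{R}^d$, $x\le y$ (dominance order) means $x_i\le y_i$ for all $i$; $y\rhd x$ means $y_i>x_i$ for all $i$. The join $x\vee y$ is the componentwise maximum. $V\subset\mathbb{R}^d$ is a finite antichain in the dominance order; its elements are called minima. The orthogonal surface $S_V$ is the topological boundary of $\langle V\rangle=\{x: x\ge v\text{ for some }v\in V\}$; equivalently $p\in S_V$ iff there is $v\in V$ with $v\le p$ and there is no $w\in V$ with $p\rhd w$. For $p\in S_V$ let $D_p=\{v\in V: v\le p\}$. A generated point is a point $p\in S_V$ with $p=\bigvee G$ for some nonempty $G\subseteq V$ (then $G\subseteq D_p$); such a $G$ is a generating set for $p$, and it is minimal if $\bigvee(G\setminus\{v\})\neq p$ for every $v\in G$. *)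

theory Defs
  imports "HOL-Analysis.Analysis"
begin

definition dom_le :: "real ^ 'd \<Rightarrow> real ^ 'd \<Rightarrow> bool" where
  "dom_le x y \<longleftrightarrow> (\<forall>i. x $ i \<le> y $ i)"

definition dom_gt :: "real ^ 'd \<Rightarrow> real ^ 'd \<Rightarrow> bool" where
  "dom_gt y x \<longleftrightarrow> (\<forall>i. y $ i > x $ i)"

definition dom_antichain :: "(real ^ 'd) set \<Rightarrow> bool" where
  "dom_antichain V \<longleftrightarrow> (\<forall>v\<in>V. \<forall>w\<in>V. dom_le v w \<longrightarrow> v = w)"

definition join :: "(real ^ 'd) set \<Rightarrow> real ^ 'd" where
  "join G = (\<chi> i. Max ((\<lambda>v. v $ i) ` G))"

definition orth_surface :: "(real ^ 'd) set \<Rightarrow> (real ^ 'd) set" where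
  "orth_surface V = {p. (\<exists>v\<in>V. dom_le v p) \<and> \<not> (\<exists>w\<in>V. dom_gt p w)}"

definition Dset :: "(real ^ 'd) set \<Rightarrow> real ^ 'd \<Rightarrow> (real ^ 'd) set" where
  "Dset V p = {v\<in>V. dom_le v p}"

definition generating_set :: "(real ^ 'd) set \<Rightarrow> real ^ 'd \<Rightarrow> (real ^ 'd) set \<Rightarrow> bool" where
  "generating_set V p G \<longleftrightarrow> G \<noteq> {} \<and> G \<subseteq> V \<and> join G = p"

text \<open>Minimality: removing any element changes the join (the join of the empty set is
  regarded as undefined, hence different from p).\<close>
definition minimal_generating_set :: "(real ^ 'd) set \<Rightarrow> real ^ 'd \<Rightarrow> (real ^ 'd) set \<Rightarrow> bool" where
  "minimal_generating_set V p G \<longleftrightarrow> generating_set V p G \<and>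
     (\<forall>v\<in>G. G - {v} = {} \<or> join (G - {v}) \<noteq> p)"

definition generated_point :: "(real ^ 'd) set \<Rightarrow> real ^ 'd \<Rightarrow> bool" where
  "generated_point V p \<longleftrightarrow> p \<in> orth_surface V \<and> (\<exists>G. generating_set V p G)"

end

theory Submission
  imports Defs
begin

lemma join_nth: "join G $ k = Max ((\<lambda>v. v $ k) ` G)"
  by (simp add: join_def)

lemma join_ge: "finite G \<Longrightarrow> v \<in> G \<Longrightarrow> v $ k \<le> join G $ k"
  unfolding join_nth by (rule Max_ge) auto

lemma join_att: "finite G \<Longrightarrow> G \<noteq> {} \<Longrightarrow> \<exists>x\<in>G. x $ k = join G $ k"
proof -
  assume "finite G" "G \<noteq> {}"
  then have "Max ((\<lambda>v. v $ k) ` G) \<in> (\<lambda>v. v $ k) ` G" by (intro Max_in) auto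
  then show ?thesis unfolding join_nth by force
qed

lemma join_lt:
  assumes "finite G" "G \<noteq> {}" "join G $ k < c" "v \<in> G" shows "v $ k < c"
  using join_ge[OF assms(1,4), of k] assms(3) by linarith

lemma main_aux:
  fixes V :: "(real ^ 'd) set" and g :: "real ^ 'd" and G1 G2 :: "(real ^ 'd) set"
  assumes "finite V"
    and m1: "minimal_generating_set V g G1" and m2: "minimal_generating_set V g G2"
    and lt: "card G1 < card G2"
  shows "\<exists>x\<in>Dset V g. \<exists>u\<in>Dset V g. \<exists>v\<in>Dset V g. \<exists>i j. i \<noteq> j \<and>
           u $ i < v $ i \<and> v $ i = x $ i \<and> x $ i = g $ i \<and>
           v $ j < u $ j \<and> u $ j = x $ j \<and> x $ j = g $ j"
proof -
  have G1: "G1 \<noteq> {}" "G1 \<subseteq> V" "join G1 = g"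
    using m1 by (auto simp: minimal_generating_set_def generating_set_def)
  have G2: "G2 \<noteq> {}" "G2 \<subseteq> V" "join G2 = g"
    and min2: "\<forall>v\<in>G2. G2 - {v} = {} \<or> join (G2 - {v}) \<noteq> g"
    using m2 by (auto simp: minimal_generating_set_def generating_set_def)
  have f1: "finite G1" and f2: "finite G2" using G1 G2 assms(1) finite_subset by auto
  have D1: "G1 \<subseteq> Dset V g" using G1 f1 join_ge unfolding Dset_def dom_le_def by blast
  have D2: "G2 \<subseteq> Dset V g" using G2 f2 join_ge unfolding Dset_def dom_le_def by blast
  have c1: "card G1 \<ge> 1" using f1 G1(1) by (simp add: Suc_le_eq card_gt_0_iff)
  have priv: "\<exists>k. v $ k = g $ k \<and> (\<forall>w\<in>G2. w \<noteq> v \<longrightarrow> w $ k < g $ k)" if v: "v \<in> G2" for v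
  proof -
    have "G2 - {v} \<noteq> {}"
    proof
      assume "G2 - {v} = {}"
      then have "G2 = {v}" using v by auto
      then show False using lt c1 by simp
    qed
    with min2 v have ne: "join (G2 - {v}) \<noteq> g" by auto
    then obtain k where k: "join (G2 - {v}) $ k \<noteq> g $ k" by (metis vec_eq_iff)
    have fG: "finite (G2 - {v})" using f2 by auto
    obtain y where y: "y \<in> G2 - {v}" "y $ k = join (G2 - {v}) $ k"
      using join_att[OF fG \<open>G2 - {v} \<noteq> {}\<close>] by blast
    have "y $ k \<le> g $ k" using join_ge[OF f2, of y k] y G2(3) by auto
    then have lt': "join (G2 - {v}) $ k < g $ k" using k y by auto
    have all: "\<forall>w\<in>G2. w \<noteq> v \<longrightarrow> w $ k < g $ k"
      using join_lt[OF fG \<open>G2 - {v} \<noteq> {}\<close> lt'] by blast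
    obtain z where z: "z \<in> G2" "z $ k = g $ k" using join_att[OF f2 G2(1), of k] G2(3) by auto
    then have "z = v" using all by force
    with z all show ?thesis by blast
  qed
  define p where "p v = (SOME k. v $ k = g $ k \<and> (\<forall>w\<in>G2. w \<noteq> v \<longrightarrow> w $ k < g $ k))" for v
  have pP: "v $ p v = g $ p v \<and> (\<forall>w\<in>G2. w \<noteq> v \<longrightarrow> w $ p v < g $ p v)" if "v \<in> G2" for v
    unfolding p_def using someI_ex[OF priv[OF that]] .
  define f where "f v = (SOME x. x \<in> G1 \<and> x $ p v = g $ p v)" for v
  have fP: "f v \<in> G1 \<and> f v $ p v = g $ p v" for v
  proof -
    have "\<exists>x. x \<in> G1 \<and> x $ p v = g $ p v" using join_att[OF f1 G1(1), of "p v"] G1(3) by auto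
    then show ?thesis unfolding f_def by (rule someI_ex)
  qed
  have "\<not> inj_on f G2"
  proof
    assume "inj_on f G2"
    then have "card G2 \<le> card G1" using fP f1 by (intro card_inj_on_le) auto
    then show False using lt by simp
  qed
  then obtain u v where uv: "u \<in> G2" "v \<in> G2" "u \<noteq> v" "f u = f v"
    unfolding inj_on_def by blast
  define x where "x = f v"
  have pu: "u $ p u = g $ p u" "v $ p u < g $ p u" using pP[OF uv(1)] uv by auto
  have pv: "v $ p v = g $ p v" "u $ p v < g $ p v" using pP[OF uv(2)] uv by auto
  have ij: "p v \<noteq> p u" using pu pv by auto
  have xi: "x $ p v = g $ p v" using fP x_def by auto
  have xj: "x $ p u = g $ p u" using fP[of u] uv(4) x_def by auto
  have "x \<in> Dset V g" using fP D1 x_def by auto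
  moreover have "u \<in> Dset V g" "v \<in> Dset V g" using uv D2 by auto
  ultimately show ?thesis using ij pu pv xi xj
    by (intro bexI[of _ x] bexI[of _ u] bexI[of _ v] exI[of _ "p v"] exI[of _ "p u"]) auto
qed

theorem lemma4p1:
  fixes V :: "(real ^ 'd) set" and g :: "real ^ 'd" and G1 G2 :: "(real ^ 'd) set"
  assumes "finite V" and "dom_antichain V"
    and "generated_point V g"
    and "minimal_generating_set V g G1" and "minimal_generating_set V g G2"
    and "card G1 \<noteq> card G2"
  shows "\<exists>x\<in>Dset V g. \<exists>u\<in>Dset V g. \<exists>v\<in>Dset V g. \<exists>i j. i \<noteq> j \<and>
           u $ i < v $ i \<and> v $ i = x $ i \<and> x $ i = g $ i \<and>
           v $ j < u $ j \<and> u $ j = x $ j \<and> x $ j = g $ j"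
proof (cases "card G1 < card G2")
  case True
  then show ?thesis using main_aux[OF assms(1,4,5)] by blast
next
  case False
  then have "card G2 < card G1" using assms(6) by linarith
  then show ?thesis using main_aux[OF assms(1,5,4)] by blast
qed

end
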